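(* Let $f\in\mathbb{C}[h]$. (1) If $f\notin\mathbb{C}$ (i.e. $f$ is not a constant polynomial), then $\deg(\alpha\beta)=\deg(\alpha)+\deg(\beta)$ (addition in $\mathbb{Z}_+^2$) for all nonzero $\alpha,\beta\in\mathcal{H}(f)$. (2) The algebra $\mathcal{H}(f)$ has no zero-divisors if and only if $f\notin\mathbb{C}$.
   Context: For $f(h)\in\mathbb{C}[h]$, $\mathcal{H}(f)$ is the unital associative $\mathbb{C}$-algebra generated by $x,y,h$ with relations $hx=xf(h)$, $yh=f(h)y$, $yx-xy=f(h)-h$. The elements $x^ih^jy^k$ ($i,j,k\ge 0$) form a basis of $\mathcal{H}(f)$, so every nonzero $\alpha\in\mathcal{H}(f)$ can be uniquely written as $\alpha=x^ng(h)y^m+\sum_{(i,j)<(n,m)}x^ig_{ij}(h)y^j$ with $0\neq g\in\mathbb{C}[h]$, $g_{ij}\in\mathbb{C}[h]$, where $<$ is the lexicographic order on $\mathbb{Z}_+^2$ ($(i,j)>(i',j')$ iff $i>i'$, or $i=i'$ and $j>j'$). Then $\deg\alpha:=(n,m)$. *)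

theory Defs
  imports "HOL-Computational_Algebra.Polynomial" "HOL-Library.Product_Lexorder"
begin

text \<open>We model the algebra H(f) abstractly: a (possibly noncommutative) unital ring 'a
together with a central unital ring homomorphism c from the complex numbers (making 'a a
complex algebra) and elements x, y, h satisfying the defining relations, such that the
monomials x^i h^j y^k form a C-basis. Any such model is isomorphic to H(f).\<close>

definition peval :: "(complex \<Rightarrow> 'a::ring_1) \<Rightarrow> complex poly \<Rightarrow> 'a \<Rightarrow> 'a" where
  "peval c p z = (\<Sum>i\<le>degree p. c (coeff p i) * z ^ i)"

definition mono :: "'a::ring_1 \<Rightarrow> 'a \<Rightarrow> 'a \<Rightarrow> nat \<times> nat \<times> nat \<Rightarrow> 'a" where
  "mono x h y t = (case t of (i, j, k) \<Rightarrow> x ^ i * h ^ j * y ^ k)"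

definition is_rep :: "(complex \<Rightarrow> 'a::ring_1) \<Rightarrow> 'a \<Rightarrow> 'a \<Rightarrow> 'a \<Rightarrow> 'a
    \<Rightarrow> (nat \<times> nat \<times> nat \<Rightarrow> complex) \<Rightarrow> bool" where
  "is_rep c x y h z a \<longleftrightarrow> finite {t. a t \<noteq> 0} \<and>
     z = (\<Sum>t\<in>{t. a t \<noteq> 0}. c (a t) * mono x h y t)"

definition Hf_model :: "complex poly \<Rightarrow> (complex \<Rightarrow> 'a::ring_1) \<Rightarrow> 'a \<Rightarrow> 'a \<Rightarrow> 'a \<Rightarrow> bool" where
  "Hf_model f c x y h \<longleftrightarrow>
     (\<forall>a b. c (a + b) = c a + c b) \<and> (\<forall>a b. c (a * b) = c a * c b) \<and> c 1 = 1 \<and>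
     (\<forall>a z. c a * z = z * c a) \<and>
     h * x = x * peval c f h \<and>
     y * h = peval c f h * y \<and>
     y * x - x * y = peval c f h - h \<and>
     (\<forall>z. \<exists>!a. is_rep c x y h z a)"

definition Hcoef :: "(complex \<Rightarrow> 'a::ring_1) \<Rightarrow> 'a \<Rightarrow> 'a \<Rightarrow> 'a \<Rightarrow> 'a \<Rightarrow> nat \<times> nat \<times> nat \<Rightarrow> complex" where
  "Hcoef c x y h z = (THE a. is_rep c x y h z a)"

text \<open>deg z = lexicographically largest (i,k) such that x^i g(h) y^k occurs with g nonzero.
The order on nat \<times> nat is the lexicographic one (Product_Lexorder).\<close>
definition Hdeg :: "(complex \<Rightarrow> 'a::ring_1) \<Rightarrow> 'a \<Rightarrow> 'a \<Rightarrow> 'a \<Rightarrow> 'a \<Rightarrow> nat \<times> nat" where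
  "Hdeg c x y h z = Max {(i, k). \<exists>j. Hcoef c x y h z (i, j, k) \<noteq> 0}"

end

theory Submission
  imports Defs
begin


locale hm =
  fixes f :: "complex poly" and c :: "complex \<Rightarrow> 'a::ring_1" and x y h :: 'a
  assumes model: "Hf_model f c x y h"
begin

lemma c_add: "c (a + b) = c a + c b" using model unfolding Hf_model_def by blast
lemma c_mult: "c (a * b) = c a * c b" using model unfolding Hf_model_def by blast
lemma c_1: "c 1 = 1" using model unfolding Hf_model_def by blast
lemma c_central: "c a * z = z * c a" using model unfolding Hf_model_def by blast
lemma hx: "h * x = x * peval c f h" using model unfolding Hf_model_def by blast
lemma yh: "y * h = peval c f h * y" using model unfolding Hf_model_def by blast
lemma yx: "y * x - x * y = peval c f h - h" using model unfolding Hf_model_def by blast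
lemma uniq: "\<exists>!a. is_rep c x y h z a" using model unfolding Hf_model_def by blast

lemma c_0[simp]: "c 0 = 0"
  using c_add[of 0 0] by simp

lemma c_minus: "c (- a) = - c a"
proof -
  have "c (-a) + c a = 0" using c_add[of "-a" a] by simp
  thus ?thesis by (simp add: eq_neg_iff_add_eq_0)
qed

abbreviation co where "co z \<equiv> Hcoef c x y h z"
abbreviation supp where "supp a \<equiv> {t. a t \<noteq> (0::complex)}"
abbreviation mo where "mo t \<equiv> Defs.mono x h y t"

lemma rep_co: "is_rep c x y h z (co z)"
  unfolding Hcoef_def using uniq[of z] by (rule theI')

lemma expand: "finite (supp (co z))" "z = (\<Sum>t\<in>supp (co z). c (co z t) * mo t)"
  using rep_co[of z] unfolding is_rep_def by auto

lemma rep_general: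
  assumes "finite A" "\<And>t. a t \<noteq> 0 \<Longrightarrow> t \<in> A" "z = (\<Sum>t\<in>A. c (a t) * mo t)"
  shows "co z = a"
proof -
  have s: "supp a \<subseteq> A" using assms(2) by auto
  have "finite (supp a)" using s assms(1) finite_subset by blast
  moreover have "(\<Sum>t\<in>A. c (a t) * mo t) = (\<Sum>t\<in>supp a. c (a t) * mo t)"
    by (rule sum.mono_neutral_right[OF assms(1) s]) auto
  ultimately have "is_rep c x y h z a" unfolding is_rep_def using assms(3) by simp
  thus ?thesis unfolding Hcoef_def by (rule the1_equality[OF uniq])
qed

lemma expand_on:
  assumes "finite A" "supp (co z) \<subseteq> A"
  shows "z = (\<Sum>t\<in>A. c (co z t) * mo t)"
proof -
  have "z = (\<Sum>t\<in>supp (co z). c (co z t) * mo t)" by (rule expand)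
  also have "\<dots> = (\<Sum>t\<in>A. c (co z t) * mo t)"
    by (rule sum.mono_neutral_left[OF assms(1) assms(2)]) auto
  finally show ?thesis .
qed

lemma co_add: "co (z + w) = (\<lambda>t. co z t + co w t)"
proof (rule rep_general)
  let ?A = "supp (co z) \<union> supp (co w)"
  show "finite ?A" using expand(1) by auto
  show "co z t + co w t \<noteq> 0 \<Longrightarrow> t \<in> ?A" for t by auto
  have "z + w = (\<Sum>t\<in>?A. c (co z t) * mo t) + (\<Sum>t\<in>?A. c (co w t) * mo t)"
    using expand_on[of ?A z] expand_on[of ?A w] expand(1) by auto
  also have "\<dots> = (\<Sum>t\<in>?A. c (co z t + co w t) * mo t)"
    by (simp add: sum.distrib[symmetric] c_add distrib_right)
  finally show "z + w = (\<Sum>t\<in>?A. c (co z t + co w t) * mo t)" .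
qed

lemma co_scal: "co (c a * z) = (\<lambda>t. a * co z t)"
proof (rule rep_general)
  let ?A = "supp (co z)"
  show "finite ?A" using expand(1) by auto
  show "a * co z t \<noteq> 0 \<Longrightarrow> t \<in> ?A" for t by auto
  have "c a * z = c a * (\<Sum>t\<in>?A. c (co z t) * mo t)" using expand(2) by metis
  also have "\<dots> = (\<Sum>t\<in>?A. c (a * co z t) * mo t)"
    by (simp add: sum_distrib_left c_mult mult.assoc)
  finally show "c a * z = (\<Sum>t\<in>?A. c (a * co z t) * mo t)" .
qed

lemma co_0: "co 0 = (\<lambda>t. 0)"
  by (rule rep_general[of "{}"]) auto

lemma co_mo: "co (mo s) = (\<lambda>t. if t = s then 1 else 0)"
  by (rule rep_general[of "{s}"]) (auto simp: c_1 split: if_splits)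

lemma co_neg: "co (- z) = (\<lambda>t. - co z t)"
proof -
  have "- z = c (-1) * z" by (simp add: c_minus c_1)
  thus ?thesis by (simp add: co_scal)
qed

lemma co_diff: "co (z - w) = (\<lambda>t. co z t - co w t)"
  by (simp only: diff_conv_add_uminus co_add co_neg)

lemma nonzero_supp: "z \<noteq> 0 \<Longrightarrow> \<exists>t. co z t \<noteq> 0"
proof (rule ccontr)
  assume z: "z \<noteq> 0" and "\<not> (\<exists>t. co z t \<noteq> 0)"
  hence "supp (co z) = {}" by simp
  hence "z = (\<Sum>t\<in>{}. c (co z t) * mo t)" using expand(2)[of z] by (simp only:)
  hence "z = 0" by simp
  thus False using z by simp
qed

definition Sset :: "(nat \<times> nat \<times> nat \<Rightarrow> bool) \<Rightarrow> 'a set" where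
  "Sset Q = {z. \<forall>t. co z t \<noteq> 0 \<longrightarrow> Q t}"

lemma Sset_0: "0 \<in> Sset Q" by (simp add: Sset_def co_0)
lemma Sset_add: "z \<in> Sset Q \<Longrightarrow> w \<in> Sset Q \<Longrightarrow> z + w \<in> Sset Q"
proof -
  assume a: "z \<in> Sset Q" "w \<in> Sset Q"
  have "Q t" if "co (z + w) t \<noteq> 0" for t
  proof -
    have "co z t \<noteq> 0 \<or> co w t \<noteq> 0" using that by (auto simp: co_add)
    thus ?thesis using a unfolding Sset_def by blast
  qed
  thus ?thesis unfolding Sset_def by blast
qed
lemma Sset_scal: "z \<in> Sset Q \<Longrightarrow> c a * z \<in> Sset Q"
  by (auto simp: Sset_def co_scal)
lemma Sset_mono: "z \<in> Sset Q \<Longrightarrow> (\<And>t. Q t \<Longrightarrow> R t) \<Longrightarrow> z \<in> Sset R"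
  by (auto simp: Sset_def)
lemma Sset_sum: "finite S \<Longrightarrow> (\<And>s. s \<in> S \<Longrightarrow> F s \<in> Sset Q) \<Longrightarrow> (\<Sum>s\<in>S. c (g s) * F s) \<in> Sset Q"
  by (induction S rule: finite_induct) (auto intro!: Sset_add Sset_scal Sset_0)

lemma Sset_lin:
  assumes "\<And>t. co z t \<noteq> 0 \<Longrightarrow> u * mo t * v \<in> Sset Q"
  shows "u * z * v \<in> Sset Q"
proof -
  let ?A = "supp (co z)"
  have "u * z * v = u * (\<Sum>t\<in>?A. c (co z t) * mo t) * v" using expand(2) by metis
  also have "\<dots> = (\<Sum>t\<in>?A. c (co z t) * (u * mo t * v))"
  proof -
    have e: "u * (c a * m) * v = c a * (u * m * v)" for a m by (metis c_central mult.assoc)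
    show ?thesis by (simp add: sum_distrib_left sum_distrib_right e)
  qed
  finally show ?thesis using assms expand(1) by (auto intro!: Sset_sum)
qed

lemma Sset_bilin:
  assumes "\<And>t s. co z t \<noteq> 0 \<Longrightarrow> co w s \<noteq> 0 \<Longrightarrow> mo t * mo s \<in> Sset Q"
  shows "z * w \<in> Sset Q"
proof -
  have "1 * z * w \<in> Sset Q"
  proof (rule Sset_lin)
    fix t assume t: "co z t \<noteq> 0"
    have "mo t * w * 1 \<in> Sset Q" by (rule Sset_lin) (simp add: assms t)
    thus "1 * mo t * w \<in> Sset Q" by simp
  qed
  thus ?thesis by simp
qed

end

context hm begin

lemma peval_upto:
  assumes "degree p < n"
  shows "peval c p z = (\<Sum>i<n. c (coeff p i) * z ^ i)"
proof -
  have "peval c p z = (\<Sum>i<Suc (degree p). c (coeff p i) * z ^ i)"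
    unfolding peval_def lessThan_Suc_atMost ..
  also have "\<dots> = (\<Sum>i<n. c (coeff p i) * z ^ i)"
    by (rule sum.mono_neutral_left) (use assms in \<open>auto simp: coeff_eq_0\<close>)
  finally show ?thesis .
qed

lemma peval_pCons: "peval c (pCons a p) z = c a + z * peval c p z"
proof -
  have d: "degree (pCons a p) < Suc (Suc (degree p))" using degree_pCons_le[of a p] by linarith
  have "peval c (pCons a p) z = (\<Sum>i<Suc (Suc (degree p)). c (coeff (pCons a p) i) * z ^ i)"
    by (rule peval_upto[OF d])
  also have "\<dots> = c a + (\<Sum>i<Suc (degree p). c (coeff p i) * z ^ Suc i)"
    by (subst sum.lessThan_Suc_shift) simp
  also have "(\<Sum>i<Suc (degree p). c (coeff p i) * z ^ Suc i) = z * peval c p z"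
  proof -
    have e: "c b * (z * w) = z * (c b * w)" for b w by (metis c_central mult.assoc)
    have "(\<Sum>i<Suc (degree p). c (coeff p i) * z ^ Suc i) = (\<Sum>i<Suc (degree p). z * (c (coeff p i) * z ^ i))"
      by (simp only: power_Suc e)
    also have "\<dots> = z * (\<Sum>i<Suc (degree p). c (coeff p i) * z ^ i)"
      by (simp only: sum_distrib_left)
    finally show ?thesis by (simp only: peval_upto[of p "Suc (degree p)", symmetric] lessI)

  qed
  finally show ?thesis .
qed

lemma peval_0[simp]: "peval c 0 z = 0"
  by (simp add: peval_def)

lemma peval_const[simp]: "peval c [:a:] z = c a"
  by (simp add: peval_pCons)

lemma peval_1[simp]: "peval c 1 z = 1"
  by (simp add: one_pCons c_1 del: pCons_one)

lemma peval_add: "peval c (p + q) z = peval c p z + peval c q z"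
proof (induction p arbitrary: q rule: pCons_induct)
  case 0 then show ?case by simp
next
  case (pCons a p)
  obtain b q' where q: "q = pCons b q'" by (cases q)
  show ?case using pCons.IH[of q'] by (simp add: q peval_pCons c_add distrib_left)
qed

lemma cz: "c b * (z * w) = z * (c b * w)" by (metis c_central mult.assoc)

lemma peval_smult: "peval c (smult a p) z = c a * peval c p z"
  by (induction p rule: pCons_induct)
     (simp_all add: peval_pCons c_mult distrib_left cz mult.assoc)

lemma peval_mult: "peval c (p * q) z = peval c p z * peval c q z"
  by (induction p rule: pCons_induct)
     (simp_all add: peval_pCons peval_add peval_smult distrib_right mult.assoc)

lemma peval_pcompose: "peval c (pcompose p q) z = peval c p (peval c q z)"
  by (induction p rule: pCons_induct)
     (simp_all add: pcompose_pCons peval_pCons peval_add peval_mult)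

lemma peval_monom: "peval c (monom 1 j) z = z ^ j"
  by (induction j) (simp_all add: monom_Suc peval_pCons monom_0 c_1 del: pCons_one)


abbreviation FF where "FF \<equiv> peval c f h"
definition fit :: "complex poly \<Rightarrow> nat \<Rightarrow> complex poly" where
  "fit P l = ((\<lambda>q. pcompose q f) ^^ l) P"
definition E :: "nat \<Rightarrow> complex poly \<Rightarrow> nat \<Rightarrow> 'a" where
  "E a P b = x ^ a * peval c P h * y ^ b"

lemma fit_0[simp]: "fit P 0 = P" by (simp add: fit_def)
lemma fit_Suc_right: "fit P (Suc l) = fit (pcompose P f) l"
  by (simp add: fit_def funpow_Suc_right del: funpow.simps)
lemma fit_Suc: "fit P (Suc l) = pcompose (fit P l) f"
  by (simp add: fit_def)

lemma hjx: "h ^ j * x = x * FF ^ j"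
proof (induction j)
  case 0 then show ?case by simp
next
  case (Suc j)
  have "h ^ Suc j * x = h * (h ^ j * x)" by (simp add: mult.assoc)
  also have "\<dots> = (h * x) * FF ^ j" by (simp add: Suc mult.assoc)
  also have "\<dots> = x * FF ^ Suc j" by (simp add: hx mult.assoc)
  finally show ?case .
qed

lemma yhj: "y * h ^ j = FF ^ j * y"
proof (induction j)
  case 0 then show ?case by simp
next
  case (Suc j)
  have "y * h ^ Suc j = (y * h) * h ^ j" by (simp add: mult.assoc)
  also have "\<dots> = FF * (y * h ^ j)" by (simp add: yh mult.assoc)
  also have "\<dots> = FF ^ Suc j * y" by (simp add: Suc mult.assoc)
  finally show ?case .
qed

lemma Px: "peval c P h * x = x * peval c (pcompose P f) h"
proof -
  have e: "c a * h ^ i * x = x * (c a * FF ^ i)" for a i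
    by (metis c_central hjx mult.assoc)
  have "peval c P h * x = (\<Sum>i\<le>degree P. c (coeff P i) * h ^ i * x)"
    by (simp add: peval_def sum_distrib_right)
  also have "\<dots> = x * peval c P FF"
    by (simp add: peval_def sum_distrib_left e)
  finally show ?thesis by (simp add: peval_pcompose)
qed

lemma yP: "y * peval c P h = peval c (pcompose P f) h * y"
proof -
  have e: "y * (c a * h ^ i) = c a * FF ^ i * y" for a i
    by (metis c_central yhj mult.assoc)
  have "y * peval c P h = (\<Sum>i\<le>degree P. y * (c (coeff P i) * h ^ i))"
    by (simp add: peval_def sum_distrib_left)
  also have "\<dots> = peval c P FF * y"
    by (simp add: peval_def sum_distrib_right e)
  finally show ?thesis by (simp add: peval_pcompose)
qed

lemma Pxl: "peval c P h * x ^ l = x ^ l * peval c (fit P l) h"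
proof (induction l arbitrary: P)
  case 0 then show ?case by simp
next
  case (Suc l)
  have "peval c P h * x ^ Suc l = (peval c P h * x) * x ^ l" by (simp add: mult.assoc)
  also have "\<dots> = x * (peval c (pcompose P f) h * x ^ l)" by (simp add: Px mult.assoc)
  also have "\<dots> = x ^ Suc l * peval c (fit P (Suc l)) h" by (simp add: Suc fit_Suc_right mult.assoc)
  finally show ?case .
qed

lemma ykP: "y ^ k * peval c P h = peval c (fit P k) h * y ^ k"
proof (induction k)
  case 0 then show ?case by simp
next
  case (Suc k)
  have "y ^ Suc k * peval c P h = y * (y ^ k * peval c P h)" by (simp add: mult.assoc)
  also have "\<dots> = (y * peval c (fit P k) h) * y ^ k" by (simp add: Suc mult.assoc)
  also have "\<dots> = peval c (fit P (Suc k)) h * y ^ Suc k" by (simp add: yP fit_Suc mult.assoc)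
  finally show ?case .
qed

lemma Pxl': "peval c P h * (x ^ l * w) = x ^ l * (peval c (fit P l) h * w)"
  by (metis Pxl mult.assoc)
lemma ykP': "y ^ k * (peval c P h * w) = peval c (fit P k) h * (y ^ k * w)"
  by (metis ykP mult.assoc)

lemma ML0: "x ^ i * peval c P h * x ^ a * peval c S h * y ^ b * peval c Q h * y ^ m
   = E (i + a) (fit P a * S * fit Q b) (b + m)"
  by (simp add: E_def mult.assoc Pxl' ykP' peval_mult power_add)

lemma mo_E: "mo t = E (fst t) (monom 1 (fst (snd t))) (snd (snd t))"
  by (cases t) (simp add: mono_def E_def peval_monom)

lemma co_sum: "finite S \<Longrightarrow> co (\<Sum>s\<in>S. c (g s) * F s) t = (\<Sum>s\<in>S. g s * co (F s) t)"
  by (induction S rule: finite_induct) (simp_all add: co_0 co_add co_scal)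

lemma co_E: "co (E a P b) t = (if fst t = a \<and> snd (snd t) = b then coeff P (fst (snd t)) else 0)"
proof -
  have e: "E a P b = (\<Sum>j\<le>degree P. c (coeff P j) * mo (a, j, b))"
  proof -
    have "E a P b = (\<Sum>j\<le>degree P. x ^ a * (c (coeff P j) * h ^ j) * y ^ b)"
      by (simp add: E_def peval_def sum_distrib_left sum_distrib_right)
    also have "\<dots> = (\<Sum>j\<le>degree P. c (coeff P j) * mo (a, j, b))"
      by (rule sum.cong) (simp_all add: mono_def mult.assoc cz)
    finally show ?thesis .
  qed
  obtain i j k where t: "t = (i, j, k)" by (cases t)
  have "co (E a P b) t = (\<Sum>j'\<le>degree P. coeff P j' * (if t = (a, j', b) then 1 else 0))"
    by (simp add: e co_sum co_mo)
  also have "\<dots> = (\<Sum>j'\<le>degree P. if j' = j then (if i = a \<and> k = b then coeff P j else 0) else 0)"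
    by (rule sum.cong) (auto simp: t)
  also have "\<dots> = (if i = a \<and> k = b then coeff P j else 0)"
    by (auto simp: coeff_eq_0)
  finally show ?thesis by (simp add: t)
qed

end

context hm begin

abbreviation Lx where "Lx n \<equiv> Sset (\<lambda>t. fst t < n)"

lemma Sset_neg: "z \<in> Sset Q \<Longrightarrow> - z \<in> Sset Q"
  by (auto simp: Sset_def co_neg)
lemma Sset_diff: "z \<in> Sset Q \<Longrightarrow> w \<in> Sset Q \<Longrightarrow> z - w \<in> Sset Q"
  by (simp only: diff_conv_add_uminus Sset_add Sset_neg)

lemma E_in: "(\<And>j. Q (a, j, b)) \<Longrightarrow> E a P b \<in> Sset Q"
  by (auto simp: Sset_def co_E)

lemma Lshift: "z \<in> Lx l \<Longrightarrow> x ^ i * peval c P h * z * (peval c Q h * y ^ m) \<in> Lx (i + l)"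
proof (rule Sset_lin)
  fix t assume z: "z \<in> Lx l" and t: "co z t \<noteq> 0"
  obtain a j b where tt: "t = (a, j, b)" by (cases t)
  have a: "a < l" using z t tt by (auto simp: Sset_def)
  have "x ^ i * peval c P h * mo t * (peval c Q h * y ^ m)
      = x ^ i * peval c P h * x ^ a * peval c (monom 1 j) h * y ^ b * peval c Q h * y ^ m"
    by (simp add: mo_E tt E_def mult.assoc)
  also have "\<dots> = E (i + a) (fit P a * monom 1 j * fit Q b) (b + m)" by (rule ML0)
  finally show "x ^ i * peval c P h * mo t * (peval c Q h * y ^ m) \<in> Lx (i + l)"
    using a by (auto intro!: E_in)
qed

lemma Lx_mono: "z \<in> Lx l \<Longrightarrow> l \<le> l' \<Longrightarrow> z \<in> Lx l'"
  by (erule Sset_mono) auto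

lemma yx': "y * x = x * y + (FF - h)"
  using yx by (simp add: algebra_simps)

lemma YX1: "\<exists>R. y * x ^ l = x ^ l * y + R \<and> R \<in> Lx l"
proof (induction l)
  case 0 show ?case by (auto intro: Sset_0)
next
  case (Suc l)
  then obtain R where R: "y * x ^ l = x ^ l * y + R" "R \<in> Lx l" by blast
  have "y * x ^ Suc l = (y * x) * x ^ l" by (simp add: mult.assoc)
  also have "\<dots> = x * (y * x ^ l) + (FF * x ^ l - h * x ^ l)"
    by (simp add: yx' algebra_simps)
  also have "\<dots> = x ^ Suc l * y + (x * R + (FF * x ^ l - h * x ^ l))"
    by (simp add: R(1) algebra_simps)
  finally have eq: "y * x ^ Suc l = x ^ Suc l * y + (x * R + (FF * x ^ l - h * x ^ l))" .
  have 1: "x * R \<in> Lx (Suc l)"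
    using Lshift[OF R(2), of 1 1 1 0] by simp
  have "FF * x ^ l = E l (fit f l) 0" by (simp add: E_def Pxl)
  moreover have "h * x ^ l = E l (fit (monom 1 1) l) 0"
    using Pxl[of "monom 1 1" l] by (simp add: E_def peval_monom)
  ultimately have 2: "FF * x ^ l - h * x ^ l \<in> Lx (Suc l)"
    by (auto intro!: Sset_diff E_in)
  show ?case using eq 1 2 by (blast intro: Sset_add)
qed

lemma yLx: "z \<in> Lx l \<Longrightarrow> y * z \<in> Lx l"
proof -
  assume z: "z \<in> Lx l"
  have "y * z * 1 \<in> Lx l"
  proof (rule Sset_lin)
    fix t assume t: "co z t \<noteq> 0"
    obtain a j b where tt: "t = (a, j, b)" by (cases t)
    have a: "a < l" using z t tt by (auto simp: Sset_def)
    obtain R where R: "y * x ^ a = x ^ a * y + R" "R \<in> Lx a" using YX1 by blast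
    have "y * mo t * 1 = (y * x ^ a) * h ^ j * y ^ b" by (simp add: tt mono_def mult.assoc)
    also have "\<dots> = x ^ a * (y * peval c (monom 1 j) h) * y ^ b + R * (h ^ j * y ^ b)"
      by (simp add: R(1) algebra_simps peval_monom)
    also have "\<dots> = E a (pcompose (monom 1 j) f) (Suc b) + R * (h ^ j * y ^ b)"
      by (simp add: yP E_def mult.assoc)
    finally have eq: "y * mo t * 1 = E a (pcompose (monom 1 j) f) (Suc b) + R * (h ^ j * y ^ b)" .
    have "x ^ 0 * peval c 1 h * R * (peval c (monom 1 j) h * y ^ b) \<in> Lx (0 + a)"
      by (rule Lshift[OF R(2)])
    hence "R * (h ^ j * y ^ b) \<in> Lx l" using a by (auto simp: peval_monom intro: Lx_mono)
    thus "y * mo t * 1 \<in> Lx l" unfolding eq using a by (auto intro!: Sset_add E_in)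
  qed
  thus ?thesis by simp
qed

lemma YX: "\<exists>R. y ^ k * x ^ l = x ^ l * y ^ k + R \<and> R \<in> Lx l"
proof (induction k)
  case 0 show ?case by (auto intro: Sset_0)
next
  case (Suc k)
  then obtain R where R: "y ^ k * x ^ l = x ^ l * y ^ k + R" "R \<in> Lx l" by blast
  obtain R1 where R1: "y * x ^ l = x ^ l * y + R1" "R1 \<in> Lx l" using YX1 by blast
  have "y ^ Suc k * x ^ l = y * (y ^ k * x ^ l)" by (simp add: mult.assoc)
  also have "\<dots> = (y * x ^ l) * y ^ k + y * R" by (simp add: R(1) algebra_simps)
  also have "\<dots> = x ^ l * y ^ Suc k + (R1 * y ^ k + y * R)" by (simp add: R1(1) algebra_simps)
  finally have eq: "y ^ Suc k * x ^ l = x ^ l * y ^ Suc k + (R1 * y ^ k + y * R)" .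
  have "x ^ 0 * peval c 1 h * R1 * (peval c 1 h * y ^ k) \<in> Lx (0 + l)" by (rule Lshift[OF R1(2)])
  hence "R1 * y ^ k \<in> Lx l" by simp
  thus ?case using eq yLx[OF R(2)] by (blast intro: Sset_add)
qed

lemma MLp: "\<exists>R. E i P k * E l Q m = E (i + l) (fit P l * fit Q k) (k + m) + R \<and> R \<in> Lx (i + l)"
proof -
  obtain R where R: "y ^ k * x ^ l = x ^ l * y ^ k + R" "R \<in> Lx l" using YX by blast
  have "E i P k * E l Q m = x ^ i * peval c P h * (y ^ k * x ^ l) * peval c Q h * y ^ m"
    by (simp add: E_def mult.assoc)
  also have "\<dots> = x ^ i * peval c P h * x ^ l * peval c 1 h * y ^ k * peval c Q h * y ^ m
      + x ^ i * peval c P h * R * (peval c Q h * y ^ m)"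
    by (simp add: R(1) algebra_simps)
  also have "x ^ i * peval c P h * x ^ l * peval c 1 h * y ^ k * peval c Q h * y ^ m
      = E (i + l) (fit P l * fit Q k) (k + m)"
    using ML0[of i P l 1 k Q m] by simp
  finally show ?thesis using Lshift[OF R(2), of i P Q m] by blast
qed


definition key :: "nat \<times> nat \<times> nat \<Rightarrow> nat \<times> nat" where "key t = (fst t, snd (snd t))"
definition padd :: "nat \<times> nat \<Rightarrow> nat \<times> nat \<Rightarrow> nat \<times> nat" where
  "padd p q = (fst p + fst q, snd p + snd q)"
abbreviation Le where "Le p \<equiv> Sset (\<lambda>t. key t \<le> p)"
abbreviation Lt where "Lt p \<equiv> Sset (\<lambda>t. key t < p)"

lemma lex_add_le: "(a::nat\<times>nat) \<le> p \<Longrightarrow> b \<le> q \<Longrightarrow> padd a b \<le> padd p q"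
  by (cases a, cases p, cases b, cases q) (auto simp: padd_def)
lemma lex_add_lt1: "(a::nat\<times>nat) < p \<Longrightarrow> b \<le> q \<Longrightarrow> padd a b < padd p q"
  by (cases a, cases p, cases b, cases q) (auto simp: padd_def)
lemma lex_add_lt2: "(a::nat\<times>nat) \<le> p \<Longrightarrow> b < q \<Longrightarrow> padd a b < padd p q"
  by (cases a, cases p, cases b, cases q) (auto simp: padd_def)

lemma mo_prod: "mo t * mo s \<in> Le (padd (key t) (key s))"
proof -
  obtain R where R: "mo t * mo s = E (fst t + fst s) (fit (monom 1 (fst (snd t))) (fst s) * fit (monom 1 (fst (snd s))) (snd (snd t))) (snd (snd t) + snd (snd s)) + R"
      "R \<in> Lx (fst t + fst s)"
    using MLp[of "fst t" _ "snd (snd t)" "fst s" _ "snd (snd s)"] unfolding mo_E by blast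
  have "R \<in> Le (padd (key t) (key s))"
    by (rule Sset_mono[OF R(2)]) (auto simp: key_def padd_def prod_le_def)
  moreover have "E (fst t + fst s) (fit (monom 1 (fst (snd t))) (fst s) * fit (monom 1 (fst (snd s))) (snd (snd t))) (snd (snd t) + snd (snd s)) \<in> Le (padd (key t) (key s))"
    by (rule E_in) (simp add: key_def padd_def)
  ultimately show ?thesis unfolding R(1) by (rule Sset_add[rotated])
qed

lemma Le_mult: "z \<in> Le p \<Longrightarrow> w \<in> Le q \<Longrightarrow> z * w \<in> Le (padd p q)"
proof -
  assume z: "z \<in> Le p" and w: "w \<in> Le q"
  show ?thesis
  proof (rule Sset_bilin)
    fix t s assume t: "co z t \<noteq> 0" and s: "co w s \<noteq> 0"
    have 1: "key t \<le> p" using z t unfolding Sset_def by blast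
    have 2: "key s \<le> q" using w s unfolding Sset_def by blast
    have 3: "padd (key t) (key s) \<le> padd p q" using 1 2 by (rule lex_add_le)
    show "mo t * mo s \<in> Le (padd p q)"
      by (rule Sset_mono[OF mo_prod]) (use 3 in \<open>auto intro: order_trans\<close>)
  qed
qed

lemma Lt_mult1: "z \<in> Lt p \<Longrightarrow> w \<in> Le q \<Longrightarrow> z * w \<in> Lt (padd p q)"
proof -
  assume z: "z \<in> Lt p" and w: "w \<in> Le q"
  show ?thesis
  proof (rule Sset_bilin)
    fix t s assume t: "co z t \<noteq> 0" and s: "co w s \<noteq> 0"
    have 1: "key t < p" using z t unfolding Sset_def by blast
    have 2: "key s \<le> q" using w s unfolding Sset_def by blast
    have 3: "padd (key t) (key s) < padd p q" using 1 2 by (rule lex_add_lt1)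
    show "mo t * mo s \<in> Lt (padd p q)"
      by (rule Sset_mono[OF mo_prod]) (use 3 in \<open>auto intro: order_le_less_trans\<close>)
  qed
qed

lemma Lt_mult2: "z \<in> Le p \<Longrightarrow> w \<in> Lt q \<Longrightarrow> z * w \<in> Lt (padd p q)"
proof -
  assume z: "z \<in> Le p" and w: "w \<in> Lt q"
  show ?thesis
  proof (rule Sset_bilin)
    fix t s assume t: "co z t \<noteq> 0" and s: "co w s \<noteq> 0"
    have 1: "key t \<le> p" using z t unfolding Sset_def by blast
    have 2: "key s < q" using w s unfolding Sset_def by blast
    have 3: "padd (key t) (key s) < padd p q" using 1 2 by (rule lex_add_lt2)
    show "mo t * mo s \<in> Lt (padd p q)"
      by (rule Sset_mono[OF mo_prod]) (use 3 in \<open>auto intro: order_le_less_trans\<close>)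
  qed
qed

lemma Lt_Le: "z \<in> Lt p \<Longrightarrow> z \<in> Le p"
  by (erule Sset_mono) simp

abbreviation deg where "deg z \<equiv> Hdeg c x y h z"

lemma degK_finite: "finite {(i, k). \<exists>j. co z (i, j, k) \<noteq> 0}"
proof -
  have "{(i, k). \<exists>j. co z (i, j, k) \<noteq> 0} \<subseteq> key ` supp (co z)"
    by (auto simp: key_def image_iff)
  thus ?thesis using expand(1)[of z] finite_subset by blast
qed

lemma Hdeg_char: "z \<in> Le p \<Longrightarrow> co z (fst p, j, snd p) \<noteq> 0 \<Longrightarrow> deg z = p"
  unfolding Hdeg_def
  by (rule Max_eqI[OF degK_finite]) (auto simp: Sset_def key_def)

lemma Hdeg_props:
  assumes "z \<noteq> 0"
  shows "z \<in> Le (deg z)" "\<exists>j. co z (fst (deg z), j, snd (deg z)) \<noteq> 0"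
proof -
  let ?K = "{(i, k). \<exists>j. co z (i, j, k) \<noteq> 0}"
  obtain t where t: "co z t \<noteq> 0" using nonzero_supp[OF assms] by blast
  have ne: "?K \<noteq> {}" using t by (cases t) auto
  have "deg z \<in> ?K" unfolding Hdeg_def by (rule Max_in[OF degK_finite ne])
  thus "\<exists>j. co z (fst (deg z), j, snd (deg z)) \<noteq> 0" by auto
  show "z \<in> Le (deg z)"
    unfolding Sset_def
  proof (intro CollectI allI impI)
    fix u assume "co z u \<noteq> 0"
    hence "key u \<in> ?K" by (cases u) (auto simp: key_def)
    thus "key u \<le> deg z" unfolding Hdeg_def by (rule Max_ge[OF degK_finite])
  qed
qed

lemma decompose:
  assumes "z \<noteq> 0"
  shows "\<exists>A. A \<noteq> 0 \<and> z - E (fst (deg z)) A (snd (deg z)) \<in> Lt (deg z)"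
proof -
  define p where "p = deg z"
  let ?g = "\<lambda>j. co z (fst p, j, snd p)"
  define J where "J = {j. ?g j \<noteq> 0}"
  have "J \<subseteq> (\<lambda>t. fst (snd t)) ` supp (co z)" unfolding J_def by force
  hence fJ: "finite J" using expand(1)[of z] finite_subset by blast
  define A where "A = (\<Sum>j\<in>J. monom (?g j) j)"
  have cA: "coeff A j = ?g j" for j
    using fJ by (auto simp: A_def coeff_sum coeff_monom J_def)
  obtain j0 where j0: "?g j0 \<noteq> 0" using Hdeg_props(2)[OF assms] p_def by blast
  have "A \<noteq> 0" using cA[of j0] j0 by auto
  moreover have "z - E (fst p) A (snd p) \<in> Lt p"
    unfolding Sset_def
  proof (intro CollectI allI impI)
    fix t assume ne: "co (z - E (fst p) A (snd p)) t \<noteq> 0"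
    obtain i j k where tt: "t = (i, j, k)" by (cases t)
    have le: "key t \<le> p" if "co z t \<noteq> 0" using Hdeg_props(1)[OF assms] that
      unfolding p_def Sset_def by blast
    show "key t < p"
    proof (cases "i = fst p \<and> k = snd p")
      case True
      thus ?thesis using ne by (simp add: co_diff co_E tt cA)
    next
      case False
      hence "co z t \<noteq> 0" "key t \<noteq> p" using ne
        by (auto simp: co_diff co_E tt key_def prod_eq_iff)
      thus ?thesis using le by auto
    qed
  qed
  ultimately show ?thesis using p_def by blast
qed

lemma fit_nonzero: "degree f \<noteq> 0 \<Longrightarrow> P \<noteq> 0 \<Longrightarrow> fit P l \<noteq> 0"
  by (induction l) (auto simp: fit_Suc dest: pcompose_eq_0)

lemma main_mult:
  assumes f: "degree f \<noteq> 0" and a: "\<alpha> \<noteq> 0" and b: "\<beta> \<noteq> 0"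
  shows "deg (\<alpha> * \<beta>) = padd (deg \<alpha>) (deg \<beta>) \<and> \<alpha> * \<beta> \<noteq> 0"
proof -
  define p where "p = deg \<alpha>"
  define q where "q = deg \<beta>"
  obtain A where A: "A \<noteq> 0" "\<alpha> - E (fst p) A (snd p) \<in> Lt p"
    using decompose[OF a] p_def by blast
  obtain B where B: "B \<noteq> 0" "\<beta> - E (fst q) B (snd q) \<in> Lt q"
    using decompose[OF b] q_def by blast
  define a' where "a' = \<alpha> - E (fst p) A (snd p)"
  define b' where "b' = \<beta> - E (fst q) B (snd q)"
  define C where "C = fit A (fst q) * fit B (snd p)"
  have C: "C \<noteq> 0" using fit_nonzero[OF f A(1)] fit_nonzero[OF f B(1)] by (simp add: C_def)
  obtain R where R: "E (fst p) A (snd p) * E (fst q) B (snd q) = E (fst p + fst q) C (snd p + snd q) + R"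
     "R \<in> Lx (fst p + fst q)"
    using MLp[of "fst p" A "snd p" "fst q" B "snd q"] unfolding C_def by blast
  have EpLe: "E (fst p) A (snd p) \<in> Le p" by (rule E_in) (simp add: key_def)
  have EqLe: "E (fst q) B (snd q) \<in> Le q" by (rule E_in) (simp add: key_def)
  have RLt: "R \<in> Lt (padd p q)"
    by (rule Sset_mono[OF R(2)]) (auto simp: key_def padd_def prod_less_def)
  have "\<alpha> * \<beta> = (E (fst p) A (snd p) + a') * (E (fst q) B (snd q) + b')"
    by (simp add: a'_def b'_def)
  also have "\<dots> = E (fst p + fst q) C (snd p + snd q)
      + (R + (E (fst p) A (snd p) * b' + a' * E (fst q) B (snd q) + a' * b'))"
    by (simp add: algebra_simps R(1))
  finally have eq: "\<alpha> * \<beta> = E (fst p + fst q) C (snd p + snd q)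
      + (R + (E (fst p) A (snd p) * b' + a' * E (fst q) B (snd q) + a' * b'))" .
  define R' where "R' = R + (E (fst p) A (snd p) * b' + a' * E (fst q) B (snd q) + a' * b')"
  have R': "R' \<in> Lt (padd p q)"
    unfolding R'_def
    using RLt Lt_mult2[OF EpLe B(2)[folded b'_def]] Lt_mult1[OF A(2)[folded a'_def] EqLe]
      Lt_mult1[OF A(2)[folded a'_def] Lt_Le[OF B(2)[folded b'_def]]]
    by (blast intro: Sset_add)
  obtain j where j: "coeff C j \<noteq> 0" using C by (metis leading_coeff_neq_0)
  have EL: "E (fst p + fst q) C (snd p + snd q) \<in> Le (padd p q)"
    by (rule E_in) (simp add: key_def padd_def)
  have inLe: "\<alpha> * \<beta> \<in> Le (padd p q)"
    unfolding eq R'_def[symmetric] using EL Lt_Le[OF R'] by (rule Sset_add)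
  have R0: "co R' (fst (padd p q), j, snd (padd p q)) = 0"
  proof -
    have "\<not> key (fst (padd p q), j, snd (padd p q)) < padd p q" by (simp add: key_def)
    thus ?thesis using R' unfolding Sset_def by blast
  qed
  have cj: "co (\<alpha> * \<beta>) (fst (padd p q), j, snd (padd p q)) \<noteq> 0"
    unfolding eq R'_def[symmetric] using j R0 by (simp add: co_add co_E padd_def)
  have "deg (\<alpha> * \<beta>) = padd p q" by (rule Hdeg_char[OF inLe cj])
  moreover have "\<alpha> * \<beta> \<noteq> 0" using cj by (auto simp: co_0)
  ultimately show ?thesis using p_def q_def by simp
qed


lemma const_zero_div:
  assumes "degree f = 0"
  shows "\<exists>\<alpha> \<beta> :: 'a. \<alpha> * \<beta> = 0 \<and> \<alpha> \<noteq> 0 \<and> \<beta> \<noteq> 0"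
proof -
  let ?l = "coeff f 0"
  have F: "FF = c ?l" using assms by (simp add: peval_def)
  have "(h - c ?l) * x = 0" using hx by (simp add: F algebra_simps c_central)
  moreover have "x \<noteq> 0"
  proof
    assume "x = 0"
    hence "co (mo (1, 0, 0)) (1, 0, 0) = co 0 (1, 0, 0)" by (simp add: mono_def)
    thus False by (simp add: co_mo co_0)
  qed
  moreover have "h - c ?l \<noteq> 0"
  proof
    assume "h - c ?l = 0"
    hence "mo (0, 1, 0) - c ?l * mo (0, 0, 0) = 0" by (simp add: mono_def)
    hence "co (mo (0, 1, 0) - c ?l * mo (0, 0, 0)) (0, 1, 0) = co 0 (0, 1, 0)" by simp
    thus False by (simp add: co_diff co_mo co_scal co_0)
  qed
  ultimately show ?thesis by blast
qed

end

theorem lemma2: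
  fixes f :: "complex poly" and c :: "complex \<Rightarrow> 'a::ring_1" and x y h :: 'a
  assumes "Hf_model f c x y h"
  shows "(degree f \<noteq> 0 \<longrightarrow>
            (\<forall>\<alpha> \<beta>. \<alpha> \<noteq> 0 \<longrightarrow> \<beta> \<noteq> 0 \<longrightarrow>
               Hdeg c x y h (\<alpha> * \<beta>) =
                 (fst (Hdeg c x y h \<alpha>) + fst (Hdeg c x y h \<beta>),
                  snd (Hdeg c x y h \<alpha>) + snd (Hdeg c x y h \<beta>))))
         \<and> ((\<forall>\<alpha> \<beta> :: 'a. \<alpha> * \<beta> = 0 \<longrightarrow> \<alpha> = 0 \<or> \<beta> = 0) \<longleftrightarrow> degree f \<noteq> 0)"
proof -
  interpret hm f c x y h by (unfold_locales) (rule assms)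
  have 1: "degree f \<noteq> 0 \<longrightarrow>
            (\<forall>\<alpha> \<beta>. \<alpha> \<noteq> 0 \<longrightarrow> \<beta> \<noteq> 0 \<longrightarrow>
               Hdeg c x y h (\<alpha> * \<beta>) =
                 (fst (Hdeg c x y h \<alpha>) + fst (Hdeg c x y h \<beta>),
                  snd (Hdeg c x y h \<alpha>) + snd (Hdeg c x y h \<beta>)))"
    using main_mult by (simp add: padd_def)
  have 2: "(\<forall>\<alpha> \<beta> :: 'a. \<alpha> * \<beta> = 0 \<longrightarrow> \<alpha> = 0 \<or> \<beta> = 0) \<longleftrightarrow> degree f \<noteq> 0"
  proof
    assume "\<forall>\<alpha> \<beta> :: 'a. \<alpha> * \<beta> = 0 \<longrightarrow> \<alpha> = 0 \<or> \<beta> = 0"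
    thus "degree f \<noteq> 0" using const_zero_div by blast
  next
    assume "degree f \<noteq> 0"
    thus "\<forall>\<alpha> \<beta> :: 'a. \<alpha> * \<beta> = 0 \<longrightarrow> \<alpha> = 0 \<or> \<beta> = 0" using main_mult by blast
  qed
  show ?thesis using 1 2 by blast
qed

end
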